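(* Let $G$ be a finitely generated group such that $[e]_g$ is a subgroup of $G$ for every $g\in G$. If $G$ satisfies the descending chain condition for normal subgroups, then $G$ is nilpotent.
   Context: $[x,y]=x^{-1}y^{-1}xy$; $[e]_g=\{[x,g]\mid x\in G\}$. The descending chain condition for normal subgroups (Min-n) means: for every chain $H_1\ge H_2\ge H_3\ge\dots$ of normal subgroups of $G$ there exists $m$ with $H_m=H_{m+1}=\cdots$. *)

theory Defs
  imports "HOL-Algebra.Algebra"
begin

definition commutator :: "('a, 'b) monoid_scheme \<Rightarrow> 'a \<Rightarrow> 'a \<Rightarrow> 'a" where
  "commutator G x y = inv\<^bsub>G\<^esub> x \<otimes>\<^bsub>G\<^esub> inv\<^bsub>G\<^esub> y \<otimes>\<^bsub>G\<^esub> x \<otimes>\<^bsub>G\<^esub> y"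

text \<open>The set [e]_g = { [x,g] | x in G }.\<close>
definition commutator_class :: "('a, 'b) monoid_scheme \<Rightarrow> 'a \<Rightarrow> 'a set" where
  "commutator_class G g = {commutator G x g | x. x \<in> carrier G}"

text \<open>Lower central series: gamma_1 = G, gamma_(i+1) = [gamma_i, G] (indexed from 0 here).\<close>
fun lower_central :: "('a, 'b) monoid_scheme \<Rightarrow> nat \<Rightarrow> 'a set" where
  "lower_central G 0 = carrier G"
| "lower_central G (Suc n) =
     generate G {commutator G x y | x y. x \<in> lower_central G n \<and> y \<in> carrier G}"

definition nilpotent :: "('a, 'b) monoid_scheme \<Rightarrow> bool" where
  "nilpotent G \<longleftrightarrow> (\<exists>n. lower_central G n = {\<one>\<^bsub>G\<^esub>})"

definition finitely_generated :: "('a, 'b) monoid_scheme \<Rightarrow> bool" where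
  "finitely_generated G \<longleftrightarrow>
     (\<exists>S. finite S \<and> S \<subseteq> carrier G \<and> generate G S = carrier G)"

definition min_n :: "('a, 'b) monoid_scheme \<Rightarrow> bool" where
  "min_n G \<longleftrightarrow>
     (\<forall>H :: nat \<Rightarrow> 'a set. (\<forall>i. H i \<lhd> G) \<and> (\<forall>i. H (Suc i) \<subseteq> H i)
        \<longrightarrow> (\<exists>m. \<forall>k\<ge>m. H k = H m))"

end

theory Submission
  imports Defs
begin

context group
begin

lemma cancel_l1 [simp]: "x \<in> carrier G \<Longrightarrow> y \<in> carrier G \<Longrightarrow> x \<otimes> (inv x \<otimes> y) = y"
  by (simp add: m_assoc[symmetric])
lemma cancel_l2 [simp]: "x \<in> carrier G \<Longrightarrow> y \<in> carrier G \<Longrightarrow> inv x \<otimes> (x \<otimes> y) = y"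
  by (simp add: m_assoc[symmetric])

lemma comm_closed [simp]: "x \<in> carrier G \<Longrightarrow> y \<in> carrier G \<Longrightarrow> commutator G x y \<in> carrier G"
  by (simp add: commutator_def)

lemma comm_inv: "x \<in> carrier G \<Longrightarrow> y \<in> carrier G \<Longrightarrow> inv (commutator G x y) = commutator G y x"
  by (simp add: commutator_def m_assoc inv_mult_group)

lemma comm_one: "x \<in> carrier G \<Longrightarrow> commutator G x \<one> = \<one>"
  by (simp add: commutator_def m_assoc)

lemma comm_mult_left: "x \<in> carrier G \<Longrightarrow> y \<in> carrier G \<Longrightarrow> g \<in> carrier G \<Longrightarrow>
  commutator G (x \<otimes> y) g = inv y \<otimes> commutator G x g \<otimes> y \<otimes> commutator G y g"
  by (simp add: commutator_def m_assoc inv_mult_group)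

lemma comm_mult_right: "t \<in> carrier G \<Longrightarrow> y \<in> carrier G \<Longrightarrow> z \<in> carrier G \<Longrightarrow>
  commutator G t (y \<otimes> z) = commutator G t z \<otimes> (inv z \<otimes> commutator G t y \<otimes> z)"
  by (simp add: commutator_def m_assoc inv_mult_group)

lemma comm_inv_right: "t \<in> carrier G \<Longrightarrow> y \<in> carrier G \<Longrightarrow>
  commutator G t (inv y) = y \<otimes> inv (commutator G t y) \<otimes> inv y"
  by (simp add: commutator_def m_assoc inv_mult_group)

lemma comm_inv_left: "a \<in> carrier G \<Longrightarrow> y \<in> carrier G \<Longrightarrow>
  commutator G (inv a) y = a \<otimes> inv (commutator G a y) \<otimes> inv a"
  by (simp add: commutator_def m_assoc inv_mult_group)

lemma conj_as_comm: "a \<in> carrier G \<Longrightarrow> z \<in> carrier G \<Longrightarrow>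
  z \<otimes> a \<otimes> inv z = a \<otimes> commutator G a (inv z)"
  by (simp add: commutator_def m_assoc)

lemma comm_conj: "g \<in> carrier G \<Longrightarrow> x \<in> carrier G \<Longrightarrow> y \<in> carrier G \<Longrightarrow>
  g \<otimes> commutator G x y \<otimes> inv g = commutator G (g \<otimes> x \<otimes> inv g) (g \<otimes> y \<otimes> inv g)"
  by (simp add: commutator_def m_assoc inv_mult_group)


lemma K_normal:
  assumes "subgroup (commutator_class G g) G" "g \<in> carrier G"
  shows "commutator_class G g \<lhd> G"
  unfolding normal_inv_iff
proof (intro conjI assms(1) ballI)
  fix x h assume x: "x \<in> carrier G" and h: "h \<in> commutator_class G g"
  then obtain y where y: "y \<in> carrier G" "h = commutator G y g"
    unfolding commutator_class_def by blast
  have e: "commutator G (y \<otimes> inv x) g = x \<otimes> commutator G y g \<otimes> inv x \<otimes> commutator G (inv x) g"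
    using comm_mult_left[of y "inv x" g] x y assms by simp
  have "x \<otimes> h \<otimes> inv x = commutator G (y \<otimes> inv x) g \<otimes> inv (commutator G (inv x) g)"
    using e x y assms by (simp add: m_assoc)
  moreover have "commutator G (y \<otimes> inv x) g \<in> commutator_class G g"
    using x y unfolding commutator_class_def by blast
  moreover have "commutator G (inv x) g \<in> commutator_class G g"
    using x y unfolding commutator_class_def by blast
  ultimately show "x \<otimes> h \<otimes> inv x \<in> commutator_class G g"
    using assms(1) by (simp add: subgroup.m_closed subgroup.m_inv_closed)
qed

lemma normal_comm_mem:
  assumes "M \<lhd> G" "x \<in> M" "y \<in> carrier G"
  shows "commutator G x y \<in> M"
proof -
  have Ms: "subgroup M G" using assms(1) by (rule normal_imp_subgroup)
  have xc: "x \<in> carrier G" using Ms assms(2) by (rule subgroup.mem_carrier)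
  have "inv y \<otimes> x \<otimes> y \<in> M" using normal.inv_op_closed1[OF assms(1) assms(3) assms(2)] .
  moreover have "inv x \<in> M" using subgroup.m_inv_closed[OF Ms assms(2)] .
  ultimately have "inv x \<otimes> (inv y \<otimes> x \<otimes> y) \<in> M"
    using subgroup.m_closed[OF Ms] by blast
  moreover have "inv x \<otimes> (inv y \<otimes> x \<otimes> y) = commutator G x y"
    unfolding commutator_def using xc assms(3) by (simp only: m_assoc inv_closed m_closed)
  ultimately show ?thesis by simp
qed

lemma K_sub_normal:
  assumes "M \<lhd> G" "a \<in> M"
  shows "commutator_class G a \<subseteq> M"
proof
  fix h assume "h \<in> commutator_class G a"
  then obtain x where x: "x \<in> carrier G" "h = commutator G x a"
    unfolding commutator_class_def by blast
  have Ms: "subgroup M G" using assms(1) by (rule normal_imp_subgroup)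
  have ac: "a \<in> carrier G" using Ms assms(2) by (rule subgroup.mem_carrier)
  have "commutator G a x \<in> M" using normal_comm_mem[OF assms x(1)] .
  hence "inv (commutator G a x) \<in> M" by (rule subgroup.m_inv_closed[OF Ms])
  thus "h \<in> M" using comm_inv[OF ac x(1)] x(2) by simp
qed

lemma C_normal:
  assumes M: "M \<lhd> G"
  shows "{x \<in> carrier G. \<forall>y \<in> carrier G. commutator G x y \<in> M} \<lhd> G" (is "?C \<lhd> G")
proof -
  have Ms: "subgroup M G" using M by (rule normal_imp_subgroup)
  have Mc: "\<And>m. m \<in> M \<Longrightarrow> m \<in> carrier G" using subgroup.mem_carrier[OF Ms] .
  have mM: "\<And>a b. a \<in> M \<Longrightarrow> b \<in> M \<Longrightarrow> a \<otimes> b \<in> M" using subgroup.m_closed[OF Ms] .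
  have iM: "\<And>a. a \<in> M \<Longrightarrow> inv a \<in> M" using subgroup.m_inv_closed[OF Ms] .
  have conjM: "\<And>z m. z \<in> carrier G \<Longrightarrow> m \<in> M \<Longrightarrow> inv z \<otimes> m \<otimes> z \<in> M"
    using normal.inv_op_closed1[OF M] .
  have mult: "a \<otimes> b \<in> ?C" if a: "a \<in> ?C" and b: "b \<in> ?C" for a b
  proof -
    have ac: "a \<in> carrier G" using a by simp
    have bc: "b \<in> carrier G" using b by simp
    have "commutator G (a \<otimes> b) y \<in> M" if y: "y \<in> carrier G" for y
    proof -
      have e: "commutator G (a \<otimes> b) y = inv b \<otimes> commutator G a y \<otimes> b \<otimes> commutator G b y"
        using comm_mult_left[OF ac bc y] .
      have "commutator G a y \<in> M" using a y by simp
      hence 1: "inv b \<otimes> commutator G a y \<otimes> b \<in> M" using conjM[OF bc] by simp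
      have 2: "commutator G b y \<in> M" using b y by simp
      show ?thesis unfolding e by (rule mM[OF 1 2])
    qed
    thus ?thesis using ac bc by simp
  qed
  have sub: "subgroup ?C G"
  proof (rule subgroupI)
    show "?C \<subseteq> carrier G" by (rule subsetI) simp
    have "\<one> \<in> ?C" using subgroup.one_closed[OF Ms] by (simp add: commutator_def)
    thus "?C \<noteq> {}" by (rule ex_in_conv[THEN iffD1, OF exI])
  next
    fix a assume a: "a \<in> ?C"
    hence ac: "a \<in> carrier G" by simp
    have "commutator G (inv a) y \<in> M" if y: "y \<in> carrier G" for y
    proof -
      have e: "commutator G (inv a) y = a \<otimes> inv (commutator G a y) \<otimes> inv a"
        using comm_inv_left[OF ac y] .
      have "inv (commutator G a y) \<in> M" using a y iM by simp
      hence "inv (inv a) \<otimes> inv (commutator G a y) \<otimes> inv a \<in> M"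
        using conjM[of "inv a"] ac by simp
      thus ?thesis unfolding e using ac by simp
    qed
    thus "inv a \<in> ?C" using ac by simp
  next
    fix a b assume "a \<in> ?C" "b \<in> ?C" thus "a \<otimes> b \<in> ?C" by (rule mult)
  qed
  show ?thesis unfolding normal_inv_iff
  proof (intro conjI sub ballI)
    fix z a assume z: "z \<in> carrier G" and a: "a \<in> ?C"
    hence ac: "a \<in> carrier G" by simp
    have izc: "inv z \<in> carrier G" using z by simp
    have cM: "commutator G a (inv z) \<in> M" using a izc by simp
    have "commutator G (commutator G a (inv z)) y \<in> M" if y: "y \<in> carrier G" for y
      using normal_comm_mem[OF M cM y] .
    hence "commutator G a (inv z) \<in> ?C" using Mc[OF cM] by simp
    hence "a \<otimes> commutator G a (inv z) \<in> ?C" by (rule mult[OF a])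
    thus "z \<otimes> a \<otimes> inv z \<in> ?C" using conj_as_comm[OF ac z] by simp
  qed
qed

lemma D_subgroup:
  assumes M: "M \<lhd> G" and t: "t \<in> carrier G"
  shows "subgroup {y \<in> carrier G. commutator G t y \<in> M} G" (is "subgroup ?D G")
proof -
  have Ms: "subgroup M G" using M by (rule normal_imp_subgroup)
  have mM: "\<And>a b. a \<in> M \<Longrightarrow> b \<in> M \<Longrightarrow> a \<otimes> b \<in> M" using subgroup.m_closed[OF Ms] .
  have iM: "\<And>a. a \<in> M \<Longrightarrow> inv a \<in> M" using subgroup.m_inv_closed[OF Ms] .
  have conjM: "\<And>z m. z \<in> carrier G \<Longrightarrow> m \<in> M \<Longrightarrow> inv z \<otimes> m \<otimes> z \<in> M"
    using normal.inv_op_closed1[OF M] .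
  have conjM2: "\<And>z m. z \<in> carrier G \<Longrightarrow> m \<in> M \<Longrightarrow> z \<otimes> m \<otimes> inv z \<in> M"
    using normal.inv_op_closed2[OF M] .
  show ?thesis
  proof (rule subgroupI)
    show "?D \<subseteq> carrier G" by (rule subsetI) simp
    have "\<one> \<in> ?D" using subgroup.one_closed[OF Ms] t by (simp add: comm_one)
    thus "?D \<noteq> {}" by (rule ex_in_conv[THEN iffD1, OF exI])
  next
    fix y assume y: "y \<in> ?D"
    hence yc: "y \<in> carrier G" by simp
    have "inv (commutator G t y) \<in> M" using y iM by simp
    hence "y \<otimes> inv (commutator G t y) \<otimes> inv y \<in> M" by (rule conjM2[OF yc])
    thus "inv y \<in> ?D" using comm_inv_right[OF t yc] yc by simp
  next
    fix y z assume y: "y \<in> ?D" and z: "z \<in> ?D"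
    have yc: "y \<in> carrier G" and zc: "z \<in> carrier G" using y z by simp_all
    have "commutator G t y \<in> M" using y by simp
    hence 1: "inv z \<otimes> commutator G t y \<otimes> z \<in> M" by (rule conjM[OF zc])
    have 2: "commutator G t z \<in> M" using z by simp
    have "commutator G t z \<otimes> (inv z \<otimes> commutator G t y \<otimes> z) \<in> M" by (rule mM[OF 2 1])
    thus "y \<otimes> z \<in> ?D" using comm_mult_right[OF t yc zc] yc zc by simp
  qed
qed

lemma comm_gen:
  assumes M: "M \<lhd> G" and S: "S \<subseteq> carrier G" "generate G S = carrier G"
    and t: "t \<in> carrier G" and h: "\<forall>s\<in>S. commutator G t s \<in> M"
  shows "\<forall>y \<in> carrier G. commutator G t y \<in> M"
proof -
  have "generate G S \<subseteq> {y \<in> carrier G. commutator G t y \<in> M}"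
    by (rule generate_subgroup_incl) (use S h D_subgroup[OF M t] in auto)
  thus ?thesis using S by auto
qed

definition ncl_of where
  "ncl_of N T \<longleftrightarrow> T \<subseteq> N \<and> (\<forall>M. M \<lhd> G \<longrightarrow> T \<subseteq> M \<longrightarrow> N \<subseteq> M)"

lemma step:
  assumes M: "M \<lhd> G" and N: "ncl_of N T" and Nc: "N \<subseteq> carrier G"
    and h: "\<forall>t\<in>T. \<forall>y\<in>carrier G. commutator G t y \<in> M"
  shows "\<forall>x\<in>N. \<forall>y\<in>carrier G. commutator G x y \<in> M"
proof -
  have "T \<subseteq> {x \<in> carrier G. \<forall>y \<in> carrier G. commutator G x y \<in> M}"
  proof
    fix t assume t: "t \<in> T"
    have "t \<in> carrier G" using t N Nc unfolding ncl_of_def by blast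
    thus "t \<in> {x \<in> carrier G. \<forall>y \<in> carrier G. commutator G x y \<in> M}" using h t by blast
  qed
  hence "N \<subseteq> {x \<in> carrier G. \<forall>y \<in> carrier G. commutator G x y \<in> M}"
    using N C_normal[OF M] unfolding ncl_of_def by blast
  thus ?thesis by blast
qed


lemma lc_normal: "lower_central G n \<lhd> G"
proof (induction n)
  case 0 show ?case by (simp add: normal_self)
next
  case (Suc n)
  have sub: "lower_central G n \<subseteq> carrier G"
    using subgroup.subset[OF normal_imp_subgroup[OF Suc]] .
  show ?case unfolding lower_central.simps
  proof (rule normal_generateI)
    show "{commutator G x y |x y. x \<in> lower_central G n \<and> y \<in> carrier G} \<subseteq> carrier G"
      using sub by auto
  next
    fix h g assume h: "h \<in> {commutator G x y |x y. x \<in> lower_central G n \<and> y \<in> carrier G}"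
      and g: "g \<in> carrier G"
    then obtain x y where xy: "h = commutator G x y" "x \<in> lower_central G n" "y \<in> carrier G" by blast
    have xc: "x \<in> carrier G" using sub xy(2) by (rule subsetD)
    have 1: "g \<otimes> x \<otimes> inv g \<in> lower_central G n" using normal.inv_op_closed2[OF Suc g xy(2)] .
    have 2: "g \<otimes> y \<otimes> inv g \<in> carrier G" using g xy(3) by simp
    have 3: "g \<otimes> h \<otimes> inv g = commutator G (g \<otimes> x \<otimes> inv g) (g \<otimes> y \<otimes> inv g)"
      unfolding xy(1) using comm_conj[OF g xc xy(3)] .
    show "g \<otimes> h \<otimes> inv g \<in> {commutator G x y |x y. x \<in> lower_central G n \<and> y \<in> carrier G}"
      unfolding 3 using 1 2 by blast
  qed
qed

lemma lc_carrier: "lower_central G n \<subseteq> carrier G"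
  using subgroup.subset[OF normal_imp_subgroup[OF lc_normal]] .

lemma lc_dec: "lower_central G (Suc n) \<subseteq> lower_central G n"
  unfolding lower_central.simps
proof (rule generate_subgroup_incl)
  show "subgroup (lower_central G n) G" using normal_imp_subgroup[OF lc_normal] .
  show "{commutator G x y |x y. x \<in> lower_central G n \<and> y \<in> carrier G} \<subseteq> lower_central G n"
  proof
    fix h assume "h \<in> {commutator G x y |x y. x \<in> lower_central G n \<and> y \<in> carrier G}"
    then obtain x y where xy: "h = commutator G x y" "x \<in> lower_central G n" "y \<in> carrier G" by blast
    show "h \<in> lower_central G n" unfolding xy(1) using normal_comm_mem[OF lc_normal xy(2,3)] .
  qed
qed

lemma gen_comm_sub:
  assumes M: "M \<lhd> G" and h: "\<forall>x\<in>lower_central G n. \<forall>y\<in>carrier G. commutator G x y \<in> M"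
  shows "lower_central G (Suc n) \<subseteq> M"
  unfolding lower_central.simps
proof (rule generate_subgroup_incl)
  show "subgroup M G" using normal_imp_subgroup[OF M] .
  show "{commutator G x y |x y. x \<in> lower_central G n \<and> y \<in> carrier G} \<subseteq> M"
  proof
    fix h' assume "h' \<in> {commutator G x y |x y. x \<in> lower_central G n \<and> y \<in> carrier G}"
    then obtain x y where xy: "h' = commutator G x y" "x \<in> lower_central G n" "y \<in> carrier G" by blast
    show "h' \<in> M" unfolding xy(1) using h xy(2,3) by simp
  qed
qed

lemma lc_ncl:
  assumes S: "finite S" "S \<subseteq> carrier G" "generate G S = carrier G"
  shows "\<exists>T. finite T \<and> ncl_of (lower_central G n) T"
proof (induction n)
  case 0
  have "ncl_of (carrier G) S"
    unfolding ncl_of_def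
  proof (intro conjI allI impI)
    show "S \<subseteq> carrier G" by (rule S(2))
    fix M assume M: "M \<lhd> G" and SM: "S \<subseteq> M"
    have "generate G S \<subseteq> M" by (rule generate_subgroup_incl[OF SM normal_imp_subgroup[OF M]])
    thus "carrier G \<subseteq> M" unfolding S(3) .
  qed
  thus ?case using S(1) by auto
next
  case (Suc n)
  then obtain T where T: "finite T" "ncl_of (lower_central G n) T" by blast
  have TL: "T \<subseteq> lower_central G n" using T(2) unfolding ncl_of_def by simp
  have Tc: "T \<subseteq> carrier G" using TL lc_carrier by (rule subset_trans)
  define T' where "T' = (\<lambda>(t,s). commutator G t s) ` (T \<times> S)"
  have "finite T'" unfolding T'_def using T(1) S(1) by simp
  moreover have "ncl_of (lower_central G (Suc n)) T'"
    unfolding ncl_of_def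
  proof (intro conjI allI impI)
    show "T' \<subseteq> lower_central G (Suc n)"
    proof
      fix c assume "c \<in> T'"
      then obtain t s where ts: "c = commutator G t s" "t \<in> T" "s \<in> S" unfolding T'_def by auto
      have "t \<in> lower_central G n" using TL ts(2) by (rule subsetD)
      moreover have "s \<in> carrier G" using S(2) ts(3) by (rule subsetD)
      ultimately have "c \<in> {commutator G x y |x y. x \<in> lower_central G n \<and> y \<in> carrier G}"
        using ts(1) by blast
      thus "c \<in> lower_central G (Suc n)" unfolding lower_central.simps by (rule generate.incl)
    qed
  next
    fix M assume M: "M \<lhd> G" and TM: "T' \<subseteq> M"
    have "\<forall>t\<in>T. \<forall>y\<in>carrier G. commutator G t y \<in> M"
    proof
      fix t assume t: "t \<in> T"
      have tc: "t \<in> carrier G" using Tc t by (rule subsetD)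
      have "\<forall>s\<in>S. commutator G t s \<in> M"
      proof
        fix s assume "s \<in> S"
        hence "commutator G t s \<in> T'" unfolding T'_def using t by force
        thus "commutator G t s \<in> M" by (rule subsetD[OF TM])
      qed
      thus "\<forall>y\<in>carrier G. commutator G t y \<in> M" by (rule comm_gen[OF M S(2,3) tc])
    qed
    hence "\<forall>x\<in>lower_central G n. \<forall>y\<in>carrier G. commutator G x y \<in> M"
      by (rule step[OF M T(2) lc_carrier])
    thus "lower_central G (Suc n) \<subseteq> M" by (rule gen_comm_sub[OF M])
  qed
  ultimately show ?case by blast
qed

lemma key_mem:
  assumes K: "\<forall>g \<in> carrier G. subgroup (commutator_class G g) G"
    and a: "a \<in> carrier G" and N: "N \<lhd> G"
    and h: "a \<in> N <#> commutator_class G a"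
  shows "a \<in> N"
proof -
  have Ns: "subgroup N G" using N by (rule normal_imp_subgroup)
  obtain n k where nk: "n \<in> N" "k \<in> commutator_class G a" "a = n \<otimes> k"
    using h unfolding set_mult_def by blast
  then obtain x where x: "x \<in> carrier G" "k = commutator G x a"
    unfolding commutator_class_def by blast
  have nc: "n \<in> carrier G" using subgroup.mem_carrier[OF Ns nk(1)] .
  define c where "c = inv x \<otimes> inv a \<otimes> x"
  have cc: "c \<in> carrier G" unfolding c_def using a x by simp
  have "a = (n \<otimes> c) \<otimes> a"
    using nk(3) unfolding x(2) commutator_def c_def using a x nc by (simp add: m_assoc)
  hence "n \<otimes> c = \<one>" using r_cancel_one'[of a "n \<otimes> c"] a nc cc by simp
  hence "inv c = n" by (rule inv_equality[OF _ cc nc])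
  hence eq: "inv x \<otimes> a \<otimes> x = n" unfolding c_def using a x by (simp add: inv_mult_group m_assoc)
  have "x \<otimes> n \<otimes> inv x = a" using a x by (simp add: eq[symmetric] m_assoc)
  thus "a \<in> N" using normal.inv_op_closed2[OF N x(1) nk(1)] by simp
qed

lemma removal:
  assumes K: "\<forall>g \<in> carrier G. subgroup (commutator_class G g) G"
    and fin: "finite T"
  shows "T \<subseteq> carrier G \<Longrightarrow>
    (\<forall>N. N \<lhd> G \<longrightarrow> (\<forall>t\<in>T. commutator_class G t \<subseteq> N) \<longrightarrow> T \<subseteq> N) \<Longrightarrow> T \<subseteq> {\<one>}"
  using fin
proof (induction T rule: finite_induct)
  case empty then show ?case by simp
next
  case (insert a T)
  have ac: "a \<in> carrier G" using insert.prems(1) by simp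
  have Ka: "commutator_class G a \<lhd> G" using K_normal[of a] K ac by simp
  have HH: "\<And>N. N \<lhd> G \<Longrightarrow> (\<forall>t\<in>insert a T. commutator_class G t \<subseteq> N) \<Longrightarrow> insert a T \<subseteq> N"
    using insert.prems(2) by blast
  have key: "a \<in> N" if N: "N \<lhd> G" and hN: "\<forall>t\<in>T. commutator_class G t \<subseteq> N" for N
  proof -
    have N': "N <#> commutator_class G a \<lhd> G"
      using normal_subgroup_set_mult_closed[OF N Ka] .
    have one_K: "\<one> \<in> commutator_class G a"
      using subgroup.one_closed[OF normal_imp_subgroup[OF Ka]] .
    have one_N: "\<one> \<in> N" using subgroup.one_closed[OF normal_imp_subgroup[OF N]] .
    have sub1: "N \<subseteq> N <#> commutator_class G a"
    proof
      fix n assume n: "n \<in> N"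
      have "n \<in> carrier G" using subgroup.mem_carrier[OF normal_imp_subgroup[OF N] n] .
      hence "n = n \<otimes> \<one>" by simp
      thus "n \<in> N <#> commutator_class G a" using n one_K unfolding set_mult_def by blast
    qed
    have sub2: "commutator_class G a \<subseteq> N <#> commutator_class G a"
    proof
      fix k assume k: "k \<in> commutator_class G a"
      have "k \<in> carrier G" using subgroup.mem_carrier[OF normal_imp_subgroup[OF Ka] k] .
      hence "k = \<one> \<otimes> k" by simp
      thus "k \<in> N <#> commutator_class G a" using k one_N unfolding set_mult_def by blast
    qed
    have "\<forall>t\<in>insert a T. commutator_class G t \<subseteq> N <#> commutator_class G a"
    proof
      fix t assume "t \<in> insert a T"
      thus "commutator_class G t \<subseteq> N <#> commutator_class G a"
      proof
        assume "t = a" thus ?thesis using sub2 by simp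
      next
        assume "t \<in> T"
        hence "commutator_class G t \<subseteq> N" using hN by simp
        thus ?thesis using sub1 by (rule subset_trans)
      qed
    qed
    hence "insert a T \<subseteq> N <#> commutator_class G a" by (rule HH[OF N'])
    hence "a \<in> N <#> commutator_class G a" by simp
    thus "a \<in> N" by (rule key_mem[OF K ac N])
  qed
  have T1: "T \<subseteq> {\<one>}"
  proof (rule insert.IH)
    show "T \<subseteq> carrier G" using insert.prems(1) by simp
    show "\<forall>N. N \<lhd> G \<longrightarrow> (\<forall>t\<in>T. commutator_class G t \<subseteq> N) \<longrightarrow> T \<subseteq> N"
    proof (intro allI impI)
      fix N assume N: "N \<lhd> G" and hN: "\<forall>t\<in>T. commutator_class G t \<subseteq> N"
      have "a \<in> N" using key[OF N hN] .
      hence "commutator_class G a \<subseteq> N" by (rule K_sub_normal[OF N])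
      hence "\<forall>t\<in>insert a T. commutator_class G t \<subseteq> N" using hN by simp
      hence "insert a T \<subseteq> N" by (rule HH[OF N])
      thus "T \<subseteq> N" by simp
    qed
  qed
  have "\<forall>t\<in>T. commutator_class G t \<subseteq> {\<one>}"
  proof
    fix t assume "t \<in> T"
    hence "t \<in> {\<one>}" using T1 by (rule subsetD[rotated])
    thus "commutator_class G t \<subseteq> {\<one>}" by (rule K_sub_normal[OF one_is_normal])
  qed
  hence "a \<in> {\<one>}" by (rule key[OF one_is_normal])
  thus ?case using T1 by simp
qed

end

theorem corollary3:
  fixes G :: "('a, 'b) monoid_scheme"
  assumes "group G"
    and "finitely_generated G"
    and "\<forall>g \<in> carrier G. subgroup (commutator_class G g) G"
    and "min_n G"
  shows "nilpotent G"
proof -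
  interpret group G by fact
  obtain S where S: "finite S" "S \<subseteq> carrier G" "generate G S = carrier G"
    using assms(2) unfolding finitely_generated_def by blast
  have ch: "(\<forall>i. lower_central G i \<lhd> G) \<and> (\<forall>i. lower_central G (Suc i) \<subseteq> lower_central G i)"
    using lc_normal lc_dec by simp
  obtain m where m: "\<forall>k\<ge>m. lower_central G k = lower_central G m"
  proof -
    have "(\<forall>i. lower_central G i \<lhd> G) \<and> (\<forall>i. lower_central G (Suc i) \<subseteq> lower_central G i)
        \<longrightarrow> (\<exists>m. \<forall>k\<ge>m. lower_central G k = lower_central G m)"
      using assms(4) unfolding min_n_def by (rule spec)
    hence "\<exists>m. \<forall>k\<ge>m. lower_central G k = lower_central G m" using ch by (rule mp)
    thus ?thesis using that by (elim exE)
  qed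
  have eq: "lower_central G (Suc m) = lower_central G m" using m le_SucI[OF order_refl] by blast
  obtain T where T: "finite T" "ncl_of (lower_central G m) T" using lc_ncl[OF S] by blast
  have TL: "T \<subseteq> lower_central G m" using T(2) unfolding ncl_of_def by simp
  have Tc: "T \<subseteq> carrier G" using TL lc_carrier by (rule subset_trans)
  have H: "\<forall>N. N \<lhd> G \<longrightarrow> (\<forall>t\<in>T. commutator_class G t \<subseteq> N) \<longrightarrow> T \<subseteq> N"
  proof (intro allI impI)
    fix N assume N: "N \<lhd> G" and hN: "\<forall>t\<in>T. commutator_class G t \<subseteq> N"
    have "\<forall>t\<in>T. \<forall>y\<in>carrier G. commutator G t y \<in> N"
    proof (intro ballI)
      fix t y assume t: "t \<in> T" and y: "y \<in> carrier G"
      have tc: "t \<in> carrier G" using Tc t by (rule subsetD)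
      have "commutator G y t \<in> commutator_class G t" using y unfolding commutator_class_def by blast
      moreover have "commutator_class G t \<subseteq> N" using hN t by (rule bspec)
      ultimately have "commutator G y t \<in> N" by (rule rev_subsetD)
      hence "inv\<^bsub>G\<^esub> (commutator G y t) \<in> N" by (rule subgroup.m_inv_closed[OF normal_imp_subgroup[OF N]])
      thus "commutator G t y \<in> N" using comm_inv[OF y tc] by simp
    qed
    hence "\<forall>x\<in>lower_central G m. \<forall>y\<in>carrier G. commutator G x y \<in> N"
      by (rule step[OF N T(2) lc_carrier])
    hence "lower_central G (Suc m) \<subseteq> N" by (rule gen_comm_sub[OF N])
    thus "T \<subseteq> N" using TL unfolding eq by simp
  qed
  have "T \<subseteq> {\<one>\<^bsub>G\<^esub>}" using removal[OF assms(3) T(1) Tc H] .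
  hence "lower_central G m \<subseteq> {\<one>\<^bsub>G\<^esub>}" using T(2) one_is_normal unfolding ncl_of_def by simp
  moreover have "\<one>\<^bsub>G\<^esub> \<in> lower_central G m"
    using subgroup.one_closed[OF normal_imp_subgroup[OF lc_normal]] .
  ultimately have "lower_central G m = {\<one>\<^bsub>G\<^esub>}" by blast
  thus ?thesis unfolding nilpotent_def by blast
qed

end
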